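(* Let $(M,\mu)$, $(N,\nu)$ be non-atomic measure spaces with $\mu(M)=\nu(N)=1$, let $1\le q<p\le\infty$, $\alpha=1/q-1/p$, and $0<t\le1$. For measurable $a$ on $M\times N$ define $$|||a|||_{p,q,t}=\sup_{E,F}\big(\mu(E)^{\alpha}\vee t^{-1}\nu(F)^{\alpha}\big)^{-1}\|1_{E\times F}\,a\|_{L^q(M\times N)},$$ over measurable $E\subset M$, $F\subset N$ of positive measure, and $$\|\!|\!|a|\!|\!\|_{p,q,t}=\sup\big\{\mu(E)^{-\alpha}\|1_{E\times F}\,a\|_{L^q(M\times N)}:\ t^{-1}\nu(F)^{\alpha}\le\mu(E)^{\alpha}\big\}$$ (over measurable $E,F$ with $\mu(E)>0$; equal to $0$ if there are none). Then $$\sup_{a}\frac{|||a|||_{p,q,t}}{\|\!|\!|a|\!|\!\|_{p,q,t}}=t^{-q/(p-q)},$$ the supremum taken over $a\in L^1(M\times N)$ for which the quotient is defined, i.e. $0<\|\!|\!|a|\!|\!\|_{p,q,t}<\infty$ (with $t^{-q/(p-q)}=1$ when $p=\infty$).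
   Context: $1_S$ is the indicator of $S$; $u\vee v=\max(u,v)$. Measures on $M\times N$ are the product measure $\mu\times\nu$. *)

theory Defs
  imports "HOL-Analysis.Analysis"
begin

definition nonatomic :: "'a measure \<Rightarrow> bool" where
  "nonatomic M \<longleftrightarrow> (\<forall>A\<in>sets M. 0 < emeasure M A \<longrightarrow>
     (\<exists>B\<in>sets M. B \<subseteq> A \<and> 0 < emeasure M B \<and> emeasure M B < emeasure M A))"

definition ennroot :: "real \<Rightarrow> ennreal \<Rightarrow> ennreal" where
  "ennroot q x = (if x = \<infinity> then \<infinity> else ennreal (enn2real x powr (1 / q)))"

definition Lq_norm :: "'a measure \<Rightarrow> real \<Rightarrow> ('a \<Rightarrow> real) \<Rightarrow> ennreal" where
  "Lq_norm M q f = ennroot q (\<integral>\<^sup>+ x. ennreal (\<bar>f x\<bar> powr q) \<partial>M)"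

definition alpha_exp :: "real \<Rightarrow> ereal \<Rightarrow> real" where
  "alpha_exp q p = 1 / q - (if p = \<infinity> then 0 else 1 / real_of_ereal p)"

definition norm1 :: "'a measure \<Rightarrow> 'b measure \<Rightarrow> ereal \<Rightarrow> real \<Rightarrow> real
    \<Rightarrow> ('a \<times> 'b \<Rightarrow> real) \<Rightarrow> ennreal" where
  "norm1 M N p q t a =
     (SUP EF \<in> {(E, F). E \<in> sets M \<and> F \<in> sets N \<and> measure M E > 0 \<and> measure N F > 0}.
        ennreal (1 / max (measure M (fst EF) powr alpha_exp q p)
                         (measure N (snd EF) powr alpha_exp q p / t))
        * Lq_norm (M \<Otimes>\<^sub>M N) q (\<lambda>x. indicator (fst EF \<times> snd EF) x * a x))"

definition norm2 :: "'a measure \<Rightarrow> 'b measure \<Rightarrow> ereal \<Rightarrow> real \<Rightarrow> real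
    \<Rightarrow> ('a \<times> 'b \<Rightarrow> real) \<Rightarrow> ennreal" where
  "norm2 M N p q t a =
     (SUP EF \<in> {(E, F). E \<in> sets M \<and> F \<in> sets N \<and> measure M E > 0 \<and>
                        measure N F powr alpha_exp q p / t \<le> measure M E powr alpha_exp q p}.
        ennreal (measure M (fst EF) powr (- alpha_exp q p))
        * Lq_norm (M \<Otimes>\<^sub>M N) q (\<lambda>x. indicator (fst EF \<times> snd EF) x * a x))"

end

theory Submission imports Defs begin

lemma (in finite_measure) nonatomic_half:
  assumes "nonatomic M" "A \<in> sets M" "measure M A > 0"
  shows "\<exists>B\<in>sets M. B \<subseteq> A \<and> 0 < measure M B \<and> measure M B \<le> measure M A / 2"
proof -
  have "0 < emeasure M A" using assms(3) by (simp add: emeasure_eq_measure)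
  then obtain B where B: "B \<in> sets M" "B \<subseteq> A" "0 < emeasure M B" "emeasure M B < emeasure M A"
    using assms(1,2) unfolding nonatomic_def by blast
  hence B': "0 < measure M B" "measure M B < measure M A"
    by (auto simp: emeasure_eq_measure ennreal_less_iff)
  show ?thesis
  proof (cases "measure M B \<le> measure M A / 2")
    case True thus ?thesis using B B' by blast
  next
    case False
    have "measure M (A - B) = measure M A - measure M B"
      using B assms by (simp add: finite_measure_Diff)
    thus ?thesis using False B B' assms
      by (intro bexI[of _ "A - B"]) auto
  qed
qed

lemma (in finite_measure) nonatomic_small:
  assumes "nonatomic M" "A \<in> sets M" "measure M A > 0" "e > 0"
  shows "\<exists>B\<in>sets M. B \<subseteq> A \<and> 0 < measure M B \<and> measure M B < e"
proof -
  have *: "\<exists>B\<in>sets M. B \<subseteq> A \<and> 0 < measure M B \<and> measure M B \<le> measure M A / 2^n" for n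
  proof (induction n)
    case 0 thus ?case using assms by auto
  next
    case (Suc n)
    then obtain B where B: "B\<in>sets M" "B \<subseteq> A" "0 < measure M B" "measure M B \<le> measure M A / 2^n"
      by blast
    then obtain C where C: "C\<in>sets M" "C \<subseteq> B" "0 < measure M C" "measure M C \<le> measure M B / 2"
      using nonatomic_half[OF assms(1)] by blast
    have "2 * measure M C * 2^n \<le> measure M B * 2^n" using C by (intro mult_right_mono) auto
    also have "\<dots> \<le> measure M A" using B by (simp add: field_simps)
    finally have "measure M C \<le> measure M A / 2 ^ Suc n" by (simp add: field_simps)
    thus ?case using B C by blast
  qed
  obtain n where n: "measure M A / e < 2 ^ n"
    using real_arch_pow[of 2 "measure M A / e"] by auto
  hence "measure M A / 2^n < e" using assms by (auto simp: field_simps)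
  thus ?thesis using *[of n] by (meson order.strict_trans1)
qed

lemma (in finite_measure) nonatomic_darboux:
  assumes na: "nonatomic M" and A: "A \<in> sets M" and c: "0 \<le> c" "c \<le> measure M A"
  shows "\<exists>B\<in>sets M. B \<subseteq> A \<and> measure M B = c"
proof -
  define S where "S B = {measure M C | C. C \<in> sets M \<and> C \<subseteq> A - B \<and> measure M B + measure M C \<le> c}" for B
  define good where "good B \<longleftrightarrow> B \<in> sets M \<and> B \<subseteq> A \<and> measure M B \<le> c" for B
  have bdd: "bdd_above (S B)" for B
    unfolding S_def by (rule bdd_aboveI[of _ "measure M (space M)"]) (auto intro: bounded_measure)
  have step: "\<exists>B'. good B' \<and> B \<subseteq> B' \<and> measure M B' - measure M B \<ge> Sup (S B) / 2" if gB: "good B" for B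
  proof -
    obtain C where C: "C \<in> sets M" "C \<subseteq> A - B" "measure M B + measure M C \<le> c" "measure M C \<ge> Sup (S B) / 2"
    proof (cases "Sup (S B) \<le> 0")
      case True thus ?thesis using that[of "{}"] gB by (auto simp: good_def)
    next
      case False
      have ne: "S B \<noteq> {}" using gB unfolding S_def good_def by (auto intro!: exI[of _ "{}"])
      have "Sup (S B) / 2 < Sup (S B)" using False by auto
      then obtain x where "x \<in> S B" "Sup (S B) / 2 < x" using less_cSup_iff[OF ne bdd] by blast
      then obtain C where "C \<in> sets M" "C \<subseteq> A - B" "measure M B + measure M C \<le> c" "x = measure M C"
        unfolding S_def by blast
      thus ?thesis using that[of C] \<open>Sup (S B) / 2 < x\<close> by simp
    qed
    have "measure M (B \<union> C) = measure M B + measure M C"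
      using C gB by (intro finite_measure_Union) (auto simp: good_def)
    thus ?thesis using C gB by (intro exI[of _ "B \<union> C"]) (auto simp: good_def)
  qed
  then obtain nxt where nxt: "\<And>B. good B \<Longrightarrow> good (nxt B) \<and> B \<subseteq> nxt B \<and> measure M (nxt B) - measure M B \<ge> Sup (S B) / 2"
    by metis
  define Bs where "Bs n = (nxt ^^ n) {}" for n
  have gBs: "good (Bs n)" for n
  proof (induction n)
    case 0 thus ?case by (simp add: Bs_def good_def c)
  next
    case (Suc n) thus ?case using nxt[OF Suc.IH] by (simp add: Bs_def)
  qed
  have BsS: "Bs (Suc n) = nxt (Bs n)" for n by (simp add: Bs_def)
  have inc: "incseq Bs" using gBs nxt by (intro incseq_SucI) (simp add: BsS)
  have rng: "range Bs \<subseteq> sets M" using gBs by (auto simp: good_def)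
  have lim: "(\<lambda>n. measure M (Bs n)) \<longlonglongrightarrow> measure M (\<Union>n. Bs n)"
    by (rule finite_Lim_measure_incseq[OF rng inc])
  define B where "B = (\<Union>n. Bs n)"
  have Bs: "B \<in> sets M" using rng unfolding B_def by auto
  have BA: "B \<subseteq> A" using gBs unfolding B_def good_def by auto
  have Bc: "measure M B \<le> c"
    using lim gBs unfolding B_def good_def by (intro LIMSEQ_le_const2[OF lim]) auto
  show ?thesis
  proof (rule ccontr)
    assume nex: "\<not> ?thesis"
    hence Blt: "measure M B < c" using Bc Bs BA by force
    have "measure M (A - B) = measure M A - measure M B"
      using Bs BA A by (simp add: finite_measure_Diff)
    hence "measure M (A - B) > 0" using Blt c by auto
    then obtain D where D: "D \<in> sets M" "D \<subseteq> A - B" "0 < measure M D" "measure M D < c - measure M B"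
      using nonatomic_small[OF na, of "A - B" "c - measure M B"] Bs A Blt by auto
    have sub: "Bs n \<subseteq> B" for n unfolding B_def by auto
    have grow: "measure M (Bs (Suc n)) \<ge> measure M (Bs n) + measure M D / 2" for n
    proof -
      have "measure M (Bs n) \<le> measure M B"
        using sub[of n] Bs by (intro finite_measure_mono) auto
      hence "measure M (Bs n) + measure M D \<le> c" using D by simp
      moreover have "D \<subseteq> A - Bs n" using D sub[of n] by blast
      ultimately have "measure M D \<in> S (Bs n)" unfolding S_def using D(1) by blast
      hence "measure M D \<le> Sup (S (Bs n))" by (rule cSup_upper[OF _ bdd])
      thus ?thesis using nxt[OF gBs[of n]] by (simp add: BsS)
    qed
    have lin: "measure M (Bs n) \<ge> real n * measure M D / 2" for n
    proof (induction n)
      case 0 thus ?case by (simp add: Bs_def)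
    next
      case (Suc n) thus ?case using grow[of n] by (simp add: field_simps)
    qed
    obtain n where n: "real n > 2 * c / measure M D" using reals_Archimedean2 by blast
    hence "real n * measure M D > 2 * c" using D by (simp add: field_simps)
    thus False using lin[of n] gBs[of n] unfolding good_def by auto
  qed
qed


lemma (in finite_measure) avg_real:
  assumes na: "nonatomic M" and u[measurable]: "u \<in> borel_measurable M" and u0: "\<And>y. 0 \<le> u y"
    and ub: "\<And>y. u y \<le> B"
    and F: "F \<in> sets M" and s: "0 < s" "s \<le> measure M F"
  shows "\<exists>A\<in>sets M. A \<subseteq> F \<and> measure M A = s \<and>
    (LINT y|M. indicator F y * u y) \<le> measure M F / s * (LINT y|M. indicator A y * u y)"
proof -
  define I where "I S = (LINT y|M. indicator S y * u y)" for S
  have int: "integrable M (\<lambda>y. indicator S y * u y)" if "S \<in> sets M" for S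
    using that u0 ub order_trans[OF u0 ub] by (intro integrable_const_bound[where B=B]) (auto simp: indicator_def)
  have add: "I (S \<union> T) = I S + I T" if "S \<in> sets M" "T \<in> sets M" "S \<inter> T = {}" for S T
  proof -
    have "I (S \<union> T) = (LINT y|M. indicator S y * u y + indicator T y * u y)"
      unfolding I_def using that by (intro Bochner_Integration.integral_cong) (auto simp: indicator_def)
    also have "\<dots> = I S + I T" unfolding I_def using that int by (intro Bochner_Integration.integral_add) auto
    finally show ?thesis .
  qed
  have ci: "(LINT y|M. indicator S y * c) = c * measure M S" if "S \<in> sets M" for S c
    using that by (simp add: Int_absorb2 sets.sets_into_space)
  have lower: "c * measure M S \<le> I S" if "S \<in> sets M" "\<And>y. y \<in> S \<Longrightarrow> c \<le> u y" for S c
  proof -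
    have "(LINT y|M. indicator S y * c) \<le> I S" unfolding I_def
      using that int[OF that(1)] integrable_const_bound[where B="\<bar>c\<bar>" and f="\<lambda>y. indicator S y * c"]
      by (intro integral_mono) (auto simp: indicator_def)
    thus ?thesis using ci[OF that(1), of c] by linarith
  qed
  have upper: "I S \<le> c * measure M S" if "S \<in> sets M" "\<And>y. y \<in> S \<Longrightarrow> u y \<le> c" for S c
  proof -
    have "I S \<le> (LINT y|M. indicator S y * c)" unfolding I_def
      using that int[OF that(1)] integrable_const_bound[where B="\<bar>c\<bar>" and f="\<lambda>y. indicator S y * c"]
      by (intro integral_mono) (auto simp: indicator_def)
    thus ?thesis using ci[OF that(1), of c] by linarith
  qed
  have mF: "measure M F > 0" using s by linarith
  define c where "c = I F / measure M F"
  have IF: "I F = c * measure M F" using mF unfolding c_def by simp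
  have c0: "0 \<le> c" unfolding c_def I_def using u0
    by (intro divide_nonneg_nonneg integral_nonneg_AE) auto
  define P where "P = {y\<in>space M. c \<le> u y} \<inter> F"
  have P: "P \<in> sets M" unfolding P_def using F by measurable
  define Q where "Q = F - P"
  have Q: "Q \<in> sets M" unfolding Q_def using P F by auto
  have PQ: "P \<union> Q = F" "P \<inter> Q = {}" unfolding Q_def P_def by auto
  have uQ: "y \<in> Q \<Longrightarrow> u y \<le> c" for y unfolding Q_def P_def using F sets.sets_into_space by fastforce
  have mPQ: "measure M F = measure M P + measure M Q"
    using PQ P Q by (metis finite_measure_Union)
  obtain A where A: "A \<in> sets M" "A \<subseteq> F" "measure M A = s" "c * s \<le> I A"
  proof (cases "s \<le> measure M P")
    case True
    then obtain A where A: "A \<in> sets M" "A \<subseteq> P" "measure M A = s"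
      using nonatomic_darboux[OF na P, of s] s True by auto
    have "c * measure M A \<le> I A" using A by (intro lower) (auto simp: P_def)
    thus ?thesis using that[of A] A unfolding P_def by auto
  next
    case False
    then obtain D where D: "D \<in> sets M" "D \<subseteq> Q" "measure M D = s - measure M P"
      using nonatomic_darboux[OF na Q, of "s - measure M P"] mPQ s by auto
    have dj: "P \<inter> D = {}" using D PQ by auto
    have mA: "measure M (P \<union> D) = s" using D dj P by (simp add: finite_measure_Union)
    have QD: "Q = D \<union> (Q - D)" "D \<inter> (Q - D) = {}" using D by auto
    have IQ: "I Q = I D + I (Q - D)" using add[of D "Q - D"] QD D Q by auto
    have mQD: "measure M (Q - D) = measure M Q - measure M D" using D Q by (simp add: finite_measure_Diff)
    have "I (Q - D) \<le> c * measure M (Q - D)" using Q D uQ by (intro upper) auto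
    moreover have "I F = I P + I Q" using add[OF P Q PQ(2)] PQ by simp
    moreover have "I (P \<union> D) = I P + I D" using add[OF P D(1) dj] .
    ultimately have "c * s \<le> I (P \<union> D)" using IF IQ mQD mPQ D(3) by (simp add: algebra_simps)
    thus ?thesis using that[of "P \<union> D"] P D mA PQ by auto
  qed
  have "I F = measure M F / s * (c * s)" using IF s by simp
  also have "\<dots> \<le> measure M F / s * I A" using A(4) mF s by (intro mult_left_mono) auto
  finally show ?thesis using A unfolding I_def by blast
qed


lemma SUP_min_nat: "(SUP n. min x (of_nat n)) = (x::ennreal)"
proof (rule antisym)
  show "(SUP n. min x (of_nat n)) \<le> x" by (rule SUP_least) simp
  show "x \<le> (SUP n. min x (of_nat n))"
  proof (cases x rule: ennreal_cases)
    case (real r)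
    obtain n where n: "r \<le> real n" using real_arch_simple by blast
    have "x \<le> of_nat n" using real n by (metis ennreal_leI ennreal_of_nat_eq_real_of_nat)
    hence "min x (of_nat n) = x" by simp
    thus ?thesis by (metis SUP_upper UNIV_I)
  next
    case top
    thus ?thesis by (simp add: ennreal_SUP_of_nat_eq_top)
  qed
qed

lemma (in finite_measure) avg_nn:
  assumes na: "nonatomic M" and h[measurable]: "h \<in> borel_measurable M" and F[measurable]: "F \<in> sets M"
    and s: "0 < s" "s \<le> measure M F"
    and K: "\<And>A. A \<in> sets M \<Longrightarrow> A \<subseteq> F \<Longrightarrow> measure M A = s \<Longrightarrow> (\<integral>\<^sup>+y. indicator A y * h y \<partial>M) \<le> K"
  shows "(\<integral>\<^sup>+y. indicator F y * h y \<partial>M) \<le> ennreal (measure M F / s) * K"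
proof -
  define hn where "hn n y = min (h y) (of_nat n)" for n y
  have hn_m[measurable]: "hn n \<in> borel_measurable M" for n unfolding hn_def by measurable
  have "(\<integral>\<^sup>+y. indicator F y * h y \<partial>M) = (\<integral>\<^sup>+y. (SUP n. indicator F y * hn n y) \<partial>M)"
    unfolding hn_def by (simp add: SUP_mult_left_ennreal[symmetric] SUP_min_nat)
  also have "\<dots> = (SUP n. \<integral>\<^sup>+y. indicator F y * hn n y \<partial>M)"
    by (rule nn_integral_monotone_convergence_SUP)
       (auto simp: incseq_def le_fun_def hn_def intro!: mult_left_mono min.mono)
  also have "\<dots> \<le> ennreal (measure M F / s) * K"
  proof (rule SUP_least)
    fix n
    define u where "u y = enn2real (hn n y)" for y
    have u_m[measurable]: "u \<in> borel_measurable M" unfolding u_def by measurable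
    have hu: "hn n y = ennreal (u y)" for y
      unfolding u_def hn_def by (cases "h y" rule: ennreal_cases) (auto simp: min_def ennreal_of_nat_eq_real_of_nat top_unique)
    have u0: "0 \<le> u y" for y unfolding u_def by simp
    have ub: "u y \<le> real n" for y
    proof -
      have "ennreal (u y) \<le> ennreal (real n)" using hu[of y] unfolding hn_def
        by (metis min.cobounded2 ennreal_of_nat_eq_real_of_nat)
      thus ?thesis by (simp add: ennreal_le_iff)
    qed
    have conv: "(\<integral>\<^sup>+y. indicator S y * hn n y \<partial>M) = ennreal (LINT y|M. indicator S y * u y)"
      if S[measurable]: "S \<in> sets M" for S
    proof -
      have "(\<integral>\<^sup>+y. indicator S y * hn n y \<partial>M) = (\<integral>\<^sup>+y. ennreal (indicator S y * u y) \<partial>M)"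
        by (intro nn_integral_cong) (auto simp: hu indicator_def)
      also have "\<dots> = ennreal (LINT y|M. indicator S y * u y)"
        using u0 ub by (intro nn_integral_eq_integral integrable_const_bound[where B="real n"])
          (auto simp: indicator_def)
      finally show ?thesis .
    qed
    obtain A where A: "A \<in> sets M" "A \<subseteq> F" "measure M A = s"
      and ineq: "(LINT y|M. indicator F y * u y) \<le> measure M F / s * (LINT y|M. indicator A y * u y)"
      using avg_real[OF na u_m u0 ub F s] by blast
    have IA0: "0 \<le> (LINT y|M. indicator A y * u y)" using u0 by (intro integral_nonneg_AE) auto
    have "(\<integral>\<^sup>+y. indicator F y * hn n y \<partial>M) \<le> ennreal (measure M F / s * (LINT y|M. indicator A y * u y))"
      using conv[OF F] ineq by (simp add: ennreal_leI)
    also have "\<dots> = ennreal (measure M F / s) * (\<integral>\<^sup>+y. indicator A y * hn n y \<partial>M)"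
      unfolding conv[OF A(1)] using IA0 s by (intro ennreal_mult) auto
    also have "\<dots> \<le> ennreal (measure M F / s) * (\<integral>\<^sup>+y. indicator A y * h y \<partial>M)"
      by (intro mult_left_mono nn_integral_mono) (auto simp: hn_def intro: mult_left_mono)
    also have "\<dots> \<le> ennreal (measure M F / s) * K"
      using K[OF A] by (intro mult_left_mono) auto
    finally show "(\<integral>\<^sup>+y. indicator F y * hn n y \<partial>M) \<le> ennreal (measure M F / s) * K" .
  qed
  finally show ?thesis .
qed


definition Jq :: "'a measure \<Rightarrow> 'b measure \<Rightarrow> real \<Rightarrow> ('a \<times> 'b \<Rightarrow> real) \<Rightarrow> 'a set \<Rightarrow> 'b set \<Rightarrow> ennreal" where
  "Jq M N q a E F = (\<integral>\<^sup>+z. ennreal (\<bar>indicator (E \<times> F) z * a z\<bar> powr q) \<partial>(M \<Otimes>\<^sub>M N))"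

lemma Lq_Jq: "Lq_norm (M \<Otimes>\<^sub>M N) q (\<lambda>x. indicator (E \<times> F) x * a x) = ennroot q (Jq M N q a E F)"
  by (simp add: Lq_norm_def Jq_def)

lemma ennroot_le_iff:
  assumes q: "0 < q" and y: "0 \<le> y"
  shows "ennroot q J \<le> ennreal y \<longleftrightarrow> J \<le> ennreal (y powr q)"
proof (cases J rule: ennreal_cases)
  case top thus ?thesis by (simp add: ennroot_def top_unique)
next
  case (real r)
  have "r powr (1/q) \<le> y \<longleftrightarrow> r \<le> y powr q"
  proof
    assume "r powr (1/q) \<le> y"
    hence "(r powr (1/q)) powr q \<le> y powr q" using q by (intro powr_mono2) auto
    thus "r \<le> y powr q" using q real by (simp add: powr_powr)
  next
    assume "r \<le> y powr q"
    hence "r powr (1/q) \<le> (y powr q) powr (1/q)" using q real by (intro powr_mono2) auto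
    thus "r powr (1/q) \<le> y" using q y by (simp add: powr_powr)
  qed
  thus ?thesis using real y by (simp add: ennroot_def ennreal_le_iff)
qed

lemma Jq_mono:
  assumes "E \<subseteq> E'"
  shows "Jq M N q a E F \<le> Jq M N q a E' F"
  unfolding Jq_def using assms
  by (intro nn_integral_mono) (auto simp: indicator_def)

lemma Jq_tonelli:
  assumes "pair_sigma_finite M N" and a[measurable]: "a \<in> borel_measurable (M \<Otimes>\<^sub>M N)"
    and A[measurable]: "A \<in> sets N"
  shows "Jq M N q a (space M) A = (\<integral>\<^sup>+y. indicator A y * (\<integral>\<^sup>+x. ennreal (\<bar>a (x, y)\<bar> powr q) \<partial>M) \<partial>N)"
proof -
  interpret pair_sigma_finite M N by fact
  have "Jq M N q a (space M) A = (\<integral>\<^sup>+z. indicator A (snd z) * ennreal (\<bar>a z\<bar> powr q) \<partial>(M \<Otimes>\<^sub>M N))"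
    unfolding Jq_def by (intro nn_integral_cong) (auto simp: indicator_def space_pair_measure)
  also have "\<dots> = (\<integral>\<^sup>+y. (\<integral>\<^sup>+x. indicator A y * ennreal (\<bar>a (x, y)\<bar> powr q) \<partial>M) \<partial>N)"
    by (subst nn_integral_snd[symmetric]) auto
  also have "\<dots> = (\<integral>\<^sup>+y. indicator A y * (\<integral>\<^sup>+x. ennreal (\<bar>a (x, y)\<bar> powr q) \<partial>M) \<partial>N)"
    by (intro nn_integral_cong) (auto simp: indicator_def)
  finally show ?thesis .
qed

lemma real_ineq_c:
  fixes t n al q x :: real
  assumes t: "0 < t" and n: "0 < n" "n \<le> 1" and al: "0 < al" "al * q \<le> 1" and q: "0 < q" and x: "0 \<le> x"
  shows "n / (t powr (1/al)) * x powr q \<le> (t powr (1 - 1/(al*q)) * x * (n powr al / t)) powr q"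
proof -
  have "(t powr (1 - 1/(al*q)) * x * (n powr al / t)) powr q
      = t powr ((1 - 1/(al*q)) * q) * x powr q * (n powr (al * q) / t powr q)"
    using t n x by (simp add: powr_mult powr_divide powr_powr)
  also have "(1 - 1/(al*q)) * q = q - 1/al" using al q by (simp add: field_simps)
  also have "t powr (q - 1/al) * x powr q * (n powr (al * q) / t powr q)
      = n powr (al * q) / t powr (1/al) * x powr q"
    using t by (simp add: powr_diff field_simps)
  finally have eq: "(t powr (1 - 1/(al*q)) * x * (n powr al / t)) powr q = n powr (al * q) / t powr (1/al) * x powr q" .
  have "n \<le> n powr (al * q)" using powr_mono'[of "al*q" 1 n] al n by simp
  hence "n / t powr (1/al) \<le> n powr (al * q) / t powr (1/al)" using t by (intro divide_right_mono) auto
  thus ?thesis unfolding eq by (intro mult_right_mono) auto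
qed

lemma key_upper:
  fixes M :: "'a measure" and N :: "'b measure"
  assumes fM: "finite_measure M" and fN: "finite_measure N" and naM: "nonatomic M" and naN: "nonatomic N"
    and mM: "measure M (space M) = 1" and mN: "measure N (space N) = 1"
    and al: "0 < al" "al * q \<le> 1" and q: "0 < q" and t: "0 < t" "t \<le> 1"
    and a[measurable]: "a \<in> borel_measurable (M \<Otimes>\<^sub>M N)" and x: "0 \<le> x"
    and dom2: "\<And>E F. E \<in> sets M \<Longrightarrow> F \<in> sets N \<Longrightarrow> measure M E > 0 \<Longrightarrow>
        measure N F powr al / t \<le> measure M E powr al \<Longrightarrow>
        Jq M N q a E F \<le> ennreal ((x * measure M E powr al) powr q)"
    and E: "E \<in> sets M" "measure M E > 0" and F: "F \<in> sets N" "measure N F > 0"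
  shows "Jq M N q a E F \<le> ennreal ((t powr (1 - 1/(al*q)) * x * max (measure M E powr al) (measure N F powr al / t)) powr q)"
proof -
  interpret M: finite_measure M by fact
  interpret N: finite_measure N by fact
  have psf: "pair_sigma_finite M N" unfolding pair_sigma_finite_def
    using M.sigma_finite_measure_axioms N.sigma_finite_measure_axioms by simp
  define C where "C = t powr (1 - 1/(al*q))"
  have C1: "1 \<le> C"
  proof -
    have "1 \<le> 1 / (al * q)" using al q by (simp add: field_simps)
    hence "t powr 0 \<le> t powr (1 - 1/(al*q))" using t by (intro powr_mono') auto
    thus ?thesis using t unfolding C_def by simp
  qed
  have monq: "ennreal (y powr q) \<le> ennreal (z powr q)" if "0 \<le> y" "y \<le> z" for y z
    using that q by (intro ennreal_leI powr_mono2) auto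
  have Cmon: "ennreal (y powr q) \<le> ennreal ((C * y) powr q)" if "0 \<le> y" for y
    using that C1 by (intro monq) (auto simp: mult_le_cancel_right1)
  define m where "m = measure M E"
  define n where "n = measure N F"
  define b where "b = n powr al / t"
  have m1: "m \<le> 1" unfolding m_def using mM M.bounded_measure by metis
  have n1: "n \<le> 1" unfolding n_def using mN N.bounded_measure by metis
  have m0: "0 < m" "0 < n" using E F by (auto simp: m_def n_def)
  have b0: "0 < b" unfolding b_def using m0 t by simp
  have main: "Jq M N q a E F \<le> ennreal ((C * x * max (m powr al) b) powr q)"
  proof (cases "b \<le> m powr al")
    case True
    hence "Jq M N q a E F \<le> ennreal ((x * m powr al) powr q)"
      using dom2[OF E(1) F(1) E(2)] by (simp add: m_def n_def b_def)
    also have "\<dots> \<le> ennreal ((C * (x * m powr al)) powr q)" using x by (intro Cmon) auto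
    finally have J: "Jq M N q a E F \<le> ennreal ((C * (x * m powr al)) powr q)" .
    have maxm: "max (m powr al) b = m powr al" using True by simp
    show "Jq M N q a E F \<le> ennreal ((C * x * max (m powr al) b) powr q)" using J maxm by (simp add: mult.assoc)
  next
    case False
    hence bm: "m powr al < b" by simp
    have maxb: "max (m powr al) b = b" using bm by simp
    show ?thesis
    proof (cases "b \<le> 1")
      case True
      define m' where "m' = b powr (1/al)"
      have "m = (m powr al) powr (1/al)" using al m0 by (simp add: powr_powr)
      also have "\<dots> < m'" unfolding m'_def using al bm by (intro powr_less_mono2) auto
      finally have mm': "m < m'" .
      have m'1: "m' \<le> 1" unfolding m'_def using True b0 al by (intro powr_le1) auto
      have m'b: "m' powr al = b" unfolding m'_def using al b0 by (simp add: powr_powr)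
      have Ds: "space M - E \<in> sets M" using E(1) by auto
      have mD: "measure M (space M - E) = 1 - m"
        using E mM by (simp add: M.finite_measure_Diff sets.sets_into_space m_def)
      obtain B where B: "B \<in> sets M" "B \<subseteq> space M - E" "measure M B = m' - m"
        using M.nonatomic_darboux[OF naM Ds, of "m' - m"] mm' m'1 mD by auto
      have mE': "measure M (E \<union> B) = m'"
        using B E by (subst M.finite_measure_Union) (auto simp: m_def)
      have "Jq M N q a E F \<le> Jq M N q a (E \<union> B) F" by (rule Jq_mono) auto
      also have "\<dots> \<le> ennreal ((x * measure M (E \<union> B) powr al) powr q)"
        using B E F mE' m'b mm' m0 by (intro dom2) (auto simp: b_def n_def)
      also have "\<dots> = ennreal ((x * b) powr q)" using mE' m'b by simp
      also have "\<dots> \<le> ennreal ((C * (x * b)) powr q)" using x b0 by (intro Cmon) auto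
      finally show "Jq M N q a E F \<le> ennreal ((C * x * max (m powr al) b) powr q)" using maxb by (simp add: mult.assoc)
    next
      case False
      hence b1: "1 < b" by simp
      define s where "s = t powr (1/al)"
      have s0: "0 < s" unfolding s_def using t by simp
      have sal: "s powr al = t" unfolding s_def using t al by (simp add: powr_powr)
      have ns: "s < n"
      proof (rule ccontr)
        assume "\<not> s < n"
        hence "n powr al \<le> s powr al" using al m0 by (intro powr_mono2) auto
        hence "b \<le> 1" unfolding b_def using sal t by simp
        thus False using b1 by simp
      qed
      define h where "h y = (\<integral>\<^sup>+x. ennreal (\<bar>a (x, y)\<bar> powr q) \<partial>M)" for y
      have hm: "h \<in> borel_measurable N" unfolding h_def by measurable
      have "Jq M N q a E F \<le> Jq M N q a (space M) F" by (rule Jq_mono) (use E sets.sets_into_space in auto)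
      also have "\<dots> = (\<integral>\<^sup>+y. indicator F y * h y \<partial>N)"
        unfolding h_def using Jq_tonelli[OF psf a F(1)] .
      also have "\<dots> \<le> ennreal (n / s) * ennreal (x powr q)"
        unfolding n_def
      proof (rule N.avg_nn[OF naN hm F(1) s0])
        show "s \<le> measure N F" using ns by (simp add: n_def)
        fix A assume A: "A \<in> sets N" "A \<subseteq> F" "measure N A = s"
        have "(\<integral>\<^sup>+y. indicator A y * h y \<partial>N) = Jq M N q a (space M) A"
          unfolding h_def using Jq_tonelli[OF psf a A(1)] by simp
        also have "\<dots> \<le> ennreal ((x * measure M (space M) powr al) powr q)"
          using A sal t mM by (intro dom2) auto
        also have "\<dots> = ennreal (x powr q)" using mM by simp
        finally show "(\<integral>\<^sup>+y. indicator A y * h y \<partial>N) \<le> ennreal (x powr q)" .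
      qed
      also have "\<dots> = ennreal (n / s * x powr q)" using s0 m0 by (intro ennreal_mult[symmetric]) auto
      also have "\<dots> \<le> ennreal ((C * x * b) powr q)"
        unfolding C_def b_def s_def using real_ineq_c[OF t(1) m0(2) n1 al q x] by (intro ennreal_leI)
      finally show "Jq M N q a E F \<le> ennreal ((C * x * max (m powr al) b) powr q)" using maxb by simp
    qed
  qed
  thus ?thesis by (simp add: C_def m_def n_def b_def)
qed


lemma real_ineq_a0:
  fixes m n t al q :: real
  assumes m: "0 < m" "m \<le> 1" and n: "0 \<le> n" and t: "0 < t" and al: "0 < al" "al * q \<le> 1" and q: "0 < q"
    and c: "n powr al / t \<le> m powr al"
  shows "m powr (- al) * (m * n) powr (1/q) \<le> t powr (1/(al*q))"
proof -
  have "n powr al \<le> t * m powr al" using c t by (simp add: field_simps)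
  hence "(n powr al) powr (1/al) \<le> (t * m powr al) powr (1/al)" using al n by (intro powr_mono2) auto
  hence nle: "n \<le> t powr (1/al) * m" using al n m t by (simp add: powr_powr powr_mult)
  have "(m * n) powr (1/q) \<le> (m * (t powr (1/al) * m)) powr (1/q)"
    using nle m n q by (intro powr_mono2 mult_left_mono) auto
  also have "\<dots> = m powr (2/q) * t powr (1/(al*q))"
  proof -
    have "(m * (t powr (1/al) * m)) powr (1/q) = m powr (1/q) * m powr (1/q) * (t powr (1/al)) powr (1/q)"
      by (simp add: powr_mult)
    also have "m powr (1/q) * m powr (1/q) = m powr (2/q)" by (simp add: powr_add[symmetric])
    also have "(t powr (1/al)) powr (1/q) = t powr (1/(al*q))" by (simp add: powr_powr)
    finally show ?thesis .
  qed
  finally have A: "(m * n) powr (1/q) \<le> m powr (2/q) * t powr (1/(al*q))" .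
  have B: "m powr (- al) * m powr (2/q) \<le> 1"
  proof -
    have "m powr (- al) * m powr (2/q) = m powr (2/q - al)" by (simp add: powr_add[symmetric])
    also have "\<dots> \<le> 1" using m al q by (intro powr_le1) (auto simp: field_simps)
    finally show ?thesis .
  qed
  have "m powr (- al) * (m * n) powr (1/q) \<le> m powr (- al) * (m powr (2/q) * t powr (1/(al*q)))"
    using A by (intro mult_left_mono) auto
  also have "\<dots> = (m powr (- al) * m powr (2/q)) * t powr (1/(al*q))" by simp
  also have "\<dots> \<le> 1 * t powr (1/(al*q))" using B by (intro mult_right_mono) auto
  finally show ?thesis by simp
qed

lemma ennroot_ennreal: "0 \<le> r \<Longrightarrow> ennroot q (ennreal r) = ennreal (r powr (1/q))"
  by (simp add: ennroot_def)

theorem proposition3p4: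
  fixes M :: "'a measure" and N :: "'b measure" and p :: ereal and q t :: real
  assumes "nonatomic M" and "nonatomic N"
    and "emeasure M (space M) = 1" and "emeasure N (space N) = 1"
    and "1 \<le> q" and "ereal q < p"
    and "0 < t" and "t \<le> 1"
  shows "(SUP a \<in> {a. integrable (M \<Otimes>\<^sub>M N) a \<and> 0 < norm2 M N p q t a \<and> norm2 M N p q t a < \<infinity>}.
            norm1 M N p q t a / norm2 M N p q t a)
         = ennreal (if p = \<infinity> then 1 else t powr (- q / (real_of_ereal p - q)))"
proof -
  have q0: "0 < q" using assms(5) by simp
  interpret M: finite_measure M using assms(3) by (intro finite_measureI) simp
  interpret N: finite_measure N using assms(4) by (intro finite_measureI) simp
  have psf: "pair_sigma_finite M N" unfolding pair_sigma_finite_def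
    using M.sigma_finite_measure_axioms N.sigma_finite_measure_axioms by simp
  have mM: "measure M (space M) = 1" using assms(3) by (simp add: measure_def)
  have mN: "measure N (space N) = 1" using assms(4) by (simp add: measure_def)
  define al where "al = alpha_exp q p"
  have alfacts: "0 < al \<and> al * q \<le> 1 \<and>
    (if p = \<infinity> then 1 else t powr (- q / (real_of_ereal p - q))) = t powr (1 - 1/(al*q))"
  proof (cases p)
    case (real r)
    have rq: "q < r" using assms(6) real by simp
    have al: "al = 1/q - 1/r" using real by (simp add: al_def alpha_exp_def)
    have "0 < al" using rq q0 by (simp add: al field_simps)
    moreover have "al * q \<le> 1" using rq q0 by (simp add: al field_simps)
    moreover have "1 - 1/(al*q) = - q/(r - q)" using rq q0 by (simp add: al field_simps)
    ultimately show ?thesis using real by simp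
  next
    case PInf
    have "al = 1/q" using PInf by (simp add: al_def alpha_exp_def)
    thus ?thesis using PInf q0 assms(7) by simp
  next
    case MInf thus ?thesis using assms(6) by simp
  qed
  have alpos: "0 < al" and alq: "al * q \<le> 1" using alfacts by auto
  define C where "C = t powr (1 - 1/(al*q))"
  have C0: "0 < C" unfolding C_def using assms(7) by simp
  have Ceq: "(if p = \<infinity> then 1 else t powr (- q / (real_of_ereal p - q))) = C"
    using alfacts unfolding C_def by simp
  define D where "D = {a. integrable (M \<Otimes>\<^sub>M N) a \<and> 0 < norm2 M N p q t a \<and> norm2 M N p q t a < \<infinity>}"
  have n1: "norm1 M N p q t a = (SUP EF \<in> {(E, F). E \<in> sets M \<and> F \<in> sets N \<and> measure M E > 0 \<and> measure N F > 0}.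
        ennreal (1 / max (measure M (fst EF) powr al) (measure N (snd EF) powr al / t))
        * ennroot q (Jq M N q a (fst EF) (snd EF)))" for a
    unfolding norm1_def Lq_Jq al_def ..
  have n2: "norm2 M N p q t a = (SUP EF \<in> {(E, F). E \<in> sets M \<and> F \<in> sets N \<and> measure M E > 0 \<and>
                        measure N F powr al / t \<le> measure M E powr al}.
        ennreal (measure M (fst EF) powr (- al)) * ennroot q (Jq M N q a (fst EF) (snd EF)))" for a
    unfolding norm2_def Lq_Jq al_def ..
  have upper: "norm1 M N p q t a \<le> ennreal C * norm2 M N p q t a" if aD: "a \<in> D" for a
  proof -
    have a[measurable]: "a \<in> borel_measurable (M \<Otimes>\<^sub>M N)" using aD by (auto simp: D_def)
    obtain x where x: "norm2 M N p q t a = ennreal x" "0 \<le> x"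
      using aD unfolding D_def by (cases "norm2 M N p q t a" rule: ennreal_cases) auto
    have dom2: "Jq M N q a E F \<le> ennreal ((x * measure M E powr al) powr q)"
      if E: "E \<in> sets M" "F \<in> sets N" "measure M E > 0" "measure N F powr al / t \<le> measure M E powr al" for E F
    proof -
      define mE where "mE = measure M E"
      define R where "R = ennroot q (Jq M N q a E F)"
      have "ennreal (mE powr (-al)) * R \<le> norm2 M N p q t a"
        unfolding n2 mE_def R_def using E by (intro SUP_upper2[of "(E, F)"]) auto
      hence le: "ennreal (mE powr (-al)) * R \<le> ennreal x" using x by simp
      have one: "ennreal (mE powr al) * ennreal (mE powr (-al)) = 1"
        using E unfolding mE_def by (simp add: ennreal_mult[symmetric] powr_minus)
      have "R = ennreal (mE powr al) * (ennreal (mE powr (-al)) * R)"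
        by (simp add: mult.assoc[symmetric] one)
      also have "\<dots> \<le> ennreal (mE powr al) * ennreal x" by (rule mult_left_mono[OF le]) simp
      also have "\<dots> = ennreal (x * mE powr al)" using x by (simp add: ennreal_mult[symmetric] mult.commute)
      finally have "R \<le> ennreal (x * mE powr al)" .
      thus ?thesis unfolding R_def mE_def using ennroot_le_iff[OF q0] x by simp
    qed
    have term_le: "ennreal (1 / max (measure M E powr al) (measure N F powr al / t)) * ennroot q (Jq M N q a E F)
        \<le> ennreal C * ennreal x"
      if EF: "E \<in> sets M" "F \<in> sets N" "measure M E > 0" "measure N F > 0" for E F
    proof -
      define mx where "mx = max (measure M E powr al) (measure N F powr al / t)"
      have mx0: "0 < mx" using EF by (simp add: mx_def less_max_iff_disj)
      have "Jq M N q a E F \<le> ennreal ((C * x * mx) powr q)"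
        using key_upper[OF M.finite_measure_axioms N.finite_measure_axioms assms(1,2) mM mN alpos alq q0
            assms(7,8) a x(2) dom2 EF(1) EF(3) EF(2) EF(4)] unfolding C_def mx_def by blast
      hence R: "ennroot q (Jq M N q a E F) \<le> ennreal (C * x * mx)"
        using ennroot_le_iff[OF q0, of "C * x * mx"] C0 x mx0 by simp
      have "ennreal (1/mx) * ennroot q (Jq M N q a E F) \<le> ennreal (1/mx) * ennreal (C * x * mx)"
        by (rule mult_left_mono[OF R]) simp
      also have "\<dots> = ennreal (1/mx * (C * x * mx))" using mx0 C0 x by (intro ennreal_mult[symmetric]) auto
      also have "1/mx * (C * x * mx) = C * x" using mx0 by simp
      also have "ennreal (C * x) = ennreal C * ennreal x" using C0 x by (intro ennreal_mult) auto
      finally show ?thesis unfolding mx_def .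
    qed
    have "norm1 M N p q t a \<le> ennreal C * ennreal x"
      unfolding n1 by (rule SUP_least) (auto intro: term_le)
    thus ?thesis using x by simp
  qed
  define a0 where "a0 = (\<lambda>_::'a \<times> 'b. 1::real)"
  have J0: "Jq M N q a0 E F = ennreal (measure M E * measure N F)" if EF: "E \<in> sets M" "F \<in> sets N" for E F
  proof -
    have "Jq M N q a0 E F = (\<integral>\<^sup>+z. indicator (E \<times> F) z \<partial>(M \<Otimes>\<^sub>M N))"
      unfolding Jq_def a0_def using q0 by (intro nn_integral_cong) (auto simp: indicator_def)
    also have "\<dots> = emeasure (M \<Otimes>\<^sub>M N) (E \<times> F)" using EF by (intro nn_integral_indicator) auto
    also have "\<dots> = emeasure M E * emeasure N F" using EF by (intro N.emeasure_pair_measure_Times)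
    also have "\<dots> = ennreal (measure M E * measure N F)"
      by (simp add: M.emeasure_eq_measure N.emeasure_eq_measure ennreal_mult)
    finally show ?thesis .
  qed
  have n2le: "norm2 M N p q t a0 \<le> ennreal (t powr (1/(al*q)))"
  proof -
    have "ennreal (measure M E powr (- al)) * ennroot q (Jq M N q a0 E F) \<le> ennreal (t powr (1/(al*q)))"
      if EF: "E \<in> sets M" "F \<in> sets N" "measure M E > 0" "measure N F powr al / t \<le> measure M E powr al" for E F
    proof -
      have "ennreal (measure M E powr (- al)) * ennroot q (Jq M N q a0 E F)
          = ennreal (measure M E powr (- al) * (measure M E * measure N F) powr (1/q))"
      proof -
        have "ennroot q (Jq M N q a0 E F) = ennreal ((measure M E * measure N F) powr (1/q))"
          by (subst J0[OF EF(1,2)], rule ennroot_ennreal) simp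
        thus ?thesis by (simp add: ennreal_mult[symmetric])
      qed
      also have "\<dots> \<le> ennreal (t powr (1/(al*q)))"
        using EF mM M.bounded_measure[of E] assms(7) alpos alq q0
        by (intro ennreal_leI real_ineq_a0) auto
      finally show ?thesis .
    qed
    thus ?thesis unfolding n2 by (intro SUP_least) auto
  qed
  have n2pos: "0 < norm2 M N p q t a0"
  proof -
    define s where "s = t powr (1/al)"
    have s: "0 < s" "s \<le> 1" unfolding s_def using assms(7,8) alpos by (auto intro: powr_le1)
    obtain A where A: "A \<in> sets N" "A \<subseteq> space N" "measure N A = s"
      using N.nonatomic_darboux[OF assms(2) sets.top[of N], of s] s mN by auto
    have sal: "s powr al = t" unfolding s_def using assms(7) alpos by (simp add: powr_powr)
    have "0 < ennreal (measure M (space M) powr (- al)) * ennroot q (Jq M N q a0 (space M) A)"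
      using A mM s by (simp add: J0 ennroot_ennreal)
    also have "\<dots> \<le> norm2 M N p q t a0"
      unfolding n2 using A mM sal assms(7) by (intro SUP_upper2[of "(space M, A)"]) auto
    finally show ?thesis .
  qed
  have n1ge: "ennreal t \<le> norm1 M N p q t a0"
  proof -
    have "ennreal t = ennreal (1 / max (measure M (space M) powr al) (measure N (space N) powr al / t))
        * ennroot q (Jq M N q a0 (space M) (space N))"
      using mM mN assms(7,8) by (simp add: J0 ennroot_def max_def)
    also have "\<dots> \<le> norm1 M N p q t a0"
      unfolding n1 using mM mN by (intro SUP_upper2[of "(space M, space N)"]) auto
    finally show ?thesis .
  qed
  have a0D: "a0 \<in> D"
  proof -
    interpret P: finite_measure "M \<Otimes>\<^sub>M N"
      by (rule finite_measure_pair_measure[OF N.finite_measure_axioms M.finite_measure_axioms])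
    show ?thesis unfolding D_def a0_def using n2pos n2le by (auto simp: a0_def order_le_less_trans)
  qed
  have lower: "ennreal C \<le> norm1 M N p q t a0 / norm2 M N p q t a0"
  proof -
    have X: "norm2 M N p q t a0 \<noteq> 0" "norm2 M N p q t a0 \<noteq> top" using a0D by (auto simp: D_def)
    have "ennreal C * norm2 M N p q t a0 \<le> ennreal C * ennreal (t powr (1/(al*q)))"
      by (rule mult_left_mono[OF n2le]) simp
    also have "\<dots> = ennreal (C * t powr (1/(al*q)))" using C0 by (simp add: ennreal_mult)
    also have "C * t powr (1/(al*q)) = t" unfolding C_def using assms(7) by (simp add: powr_add[symmetric])
    finally have "ennreal C * norm2 M N p q t a0 \<le> norm1 M N p q t a0" using n1ge by simp
    hence "ennreal C * norm2 M N p q t a0 / norm2 M N p q t a0 \<le> norm1 M N p q t a0 / norm2 M N p q t a0"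
      by (rule divide_right_mono_ennreal)
    thus ?thesis using X by (simp add: mult_divide_eq_ennreal)
  qed
  have "(SUP a \<in> D. norm1 M N p q t a / norm2 M N p q t a) = ennreal C"
  proof (rule antisym)
    show "(SUP a \<in> D. norm1 M N p q t a / norm2 M N p q t a) \<le> ennreal C"
    proof (rule SUP_least)
      fix a assume aD: "a \<in> D"
      have X: "norm2 M N p q t a \<noteq> 0" "norm2 M N p q t a \<noteq> top" using aD by (auto simp: D_def)
      have "norm1 M N p q t a / norm2 M N p q t a \<le> ennreal C * norm2 M N p q t a / norm2 M N p q t a"
        by (rule divide_right_mono_ennreal[OF upper[OF aD]])
      also have "\<dots> = ennreal C" using X by (simp add: mult_divide_eq_ennreal)
      finally show "norm1 M N p q t a / norm2 M N p q t a \<le> ennreal C" .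
    qed
    show "ennreal C \<le> (SUP a \<in> D. norm1 M N p q t a / norm2 M N p q t a)"
      using a0D lower by (intro SUP_upper2[of a0]) auto
  qed
  thus ?thesis unfolding D_def Ceq .
qed

end
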